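(* Let $\mathcal{A}\subseteq\{1,\dots,T,+\infty\}$ be a finite set of adoption cohorts (ordered with $+\infty$ largest), let $\pi_a>0$ for $a\in\mathcal{A}$, and let real numbers $Y_{a,t}$ ($a\in\mathcal{A}$, $t\in\{1,\dots,T\}$), vectors $\theta_a\in\mathbb{R}^r$ ($a\in\mathcal{A}$) and $\psi_t\in\mathbb{R}^r$ ($t\in\{1,\dots,T\}$) be given. Consider the weighted least squares problem $$\min_{\{\alpha_a,\beta_t,\phi_t,\nu_a,\tau_{a,k}\}}\ \sum_{a\in\mathcal{A}}\sum_{t=1}^T \pi_a\Big(Y_{a,t}-\alpha_a-\beta_t-\theta_a^\top\phi_t-\nu_a^\top\psi_t-\mathbf{1}\{a\le t\}\tau_{a,t-a}\Big)^2,$$ over $\alpha_a\in\mathbb{R}$, $\beta_t\in\mathbb{R}$, $\phi_t\in\mathbb{R}^r$, $\nu_a\in\mathbb{R}^r$ and $\tau_{a,k}\in\mathbb{R}$ (one parameter for each $a\in\mathcal{A}$, $k\ge 0$ with $a+k\le T$), and denote by $\hat\tau^{OLS}_{a,k}$ the $\tau_{a,k}$-component of a minimizer. Suppose there exist periods $a^\star\ge t^\star$ such that the set $\{\theta_j: j\in\mathcal{A}, j>a^\star\}$ and the set $\{\psi_l: l<t^\star\}$ each affinely span $\mathbb{R}^r$. Then for every cohort $a$ and horizon $k\ge0$ with $t^\star\le a+k\le a^\star$, $\hat\tau^{OLS}_{a,k}$ is uniquely determined (the same for all minimizers), and it equals the value produced by the following sequential algorithm (Sequential OLS): for $k=0,1,\dots,a^\star-t^\star$,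 and within each $k$ for $a=t^\star,\dots,a^\star-k$ in increasing order (with $a\in\mathcal{A}$), do: (i) compute $$\tilde\omega^{(a)}:=\arg\min_{\omega}\sum_{j>a}\frac{\omega_j^2}{\pi_j}\ \text{ s.t. }\ \sum_{j>a}\omega_j=1,\ \sum_{j>a}\theta_j\omega_j=\theta_a,$$ $$\tilde\lambda^{(a,k)}:=\arg\min_{\lambda}\sum_{l<a+k}\lambda_l^2\ \text{ s.t. }\ \sum_{l<a+k}\lambda_l=1,\ \sum_{l<a+k}\lambda_l\psi_l=\psi_{a+k},$$ where $j$ ranges over cohorts in $\mathcal{A}$ with $j>a$ and $l$ over periods in $\{1,\dots,T\}$ with $l<a+k$; (ii) set $$\hat\tau^{OLS}_{a,k}:=\Big(Y_{a,a+k}-\sum_{j>a}\tilde\omega^{(a)}_jY_{j,a+k}\Big)-\sum_{l<a+k}\tilde\lambda^{(a,k)}_l\Big(Y_{a,l}-\sum_{j>a}\tilde\omega^{(a)}_jY_{j,l}\Big);$$ (iii) overwrite $Y_{a,a+k}:=Y_{a,a+k}-\hat\tau^{OLS}_{a,k}$ and use the updated data in all subsequent iterations.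
   Context: Here $\mathcal{A}$ plays the role of the set of observed adoption times (cohorts), $a=+\infty$ denoting the never-treated cohort, $Y_{a,t}$ is the average outcome of units in cohort $a$ in period $t$, and $\pi_a=n_a/n$ is the share of units in cohort $a$. The vectors $\theta_a$ (cohort factor loadings) and $\psi_t$ (time factors) are treated as known regressors ("oracle"). In the minimization, $\tau_{a,t-a}$ is the treatment effect of cohort $a$ at horizon $t-a$, present only when $a\le t$. *)

theory Defs
  imports "HOL-Analysis.Analysis" "HOL-Library.Extended_Nat"
begin

text \<open>Cohorts are elements of enat: finite adoption periods enat a (1 <= a <= T)
  and the never-treated cohort infinity. Periods are naturals 1..T.
  Vectors in R^r are elements of real^'r.\<close>

definition ssr ::
  "enat set \<Rightarrow> nat \<Rightarrow> (enat \<Rightarrow> real) \<Rightarrow> (enat \<Rightarrow> nat \<Rightarrow> real)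
   \<Rightarrow> (enat \<Rightarrow> real^'r) \<Rightarrow> (nat \<Rightarrow> real^'r)
   \<Rightarrow> (enat \<Rightarrow> real) \<Rightarrow> (nat \<Rightarrow> real) \<Rightarrow> (nat \<Rightarrow> real^'r) \<Rightarrow> (enat \<Rightarrow> real^'r)
   \<Rightarrow> (enat \<Rightarrow> nat \<Rightarrow> real) \<Rightarrow> real" where
  "ssr A T \<pi> Y \<theta> \<psi> \<alpha> \<beta> \<phi> \<nu> \<tau> =
    (\<Sum>a\<in>A. \<Sum>t=1..T. \<pi> a *
       (Y a t - \<alpha> a - \<beta> t - \<theta> a \<bullet> \<phi> t - \<nu> a \<bullet> \<psi> t
        - (if a \<le> enat t then \<tau> a (t - the_enat a) else 0))\<^sup>2)"

definition is_ols_minimizer ::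
  "enat set \<Rightarrow> nat \<Rightarrow> (enat \<Rightarrow> real) \<Rightarrow> (enat \<Rightarrow> nat \<Rightarrow> real)
   \<Rightarrow> (enat \<Rightarrow> real^'r) \<Rightarrow> (nat \<Rightarrow> real^'r)
   \<Rightarrow> (enat \<Rightarrow> real) \<Rightarrow> (nat \<Rightarrow> real) \<Rightarrow> (nat \<Rightarrow> real^'r) \<Rightarrow> (enat \<Rightarrow> real^'r)
   \<Rightarrow> (enat \<Rightarrow> nat \<Rightarrow> real) \<Rightarrow> bool" where
  "is_ols_minimizer A T \<pi> Y \<theta> \<psi> \<alpha> \<beta> \<phi> \<nu> \<tau> \<longleftrightarrow>
    (\<forall>\<alpha>' \<beta>' \<phi>' \<nu>' \<tau>'. ssr A T \<pi> Y \<theta> \<psi> \<alpha> \<beta> \<phi> \<nu> \<tau> \<le> ssr A T \<pi> Y \<theta> \<psi> \<alpha>' \<beta>' \<phi>' \<nu>' \<tau>')"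

definition argmin_on :: "('x \<Rightarrow> real) \<Rightarrow> 'x set \<Rightarrow> 'x" where
  "argmin_on f S = (THE x. x \<in> S \<and> (\<forall>y\<in>S. f x \<le> f y))"

definition omega_tilde ::
  "enat set \<Rightarrow> (enat \<Rightarrow> real) \<Rightarrow> (enat \<Rightarrow> real^'r) \<Rightarrow> nat \<Rightarrow> enat \<Rightarrow> real" where
  "omega_tilde A \<pi> \<theta> a =
    (let J = {j\<in>A. enat a < j} in
     argmin_on (\<lambda>\<omega>. \<Sum>j\<in>J. (\<omega> j)\<^sup>2 / \<pi> j)
       {\<omega>. (\<forall>j. j \<notin> J \<longrightarrow> \<omega> j = 0) \<and> (\<Sum>j\<in>J. \<omega> j) = 1
            \<and> (\<Sum>j\<in>J. \<omega> j *\<^sub>R \<theta> j) = \<theta> (enat a)})"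

text \<open>Time weights lambda-tilde^(a,k), with s = a + k: indexed by periods
  l in {1..T} with l < s (set to 0 elsewhere).\<close>
definition lambda_tilde :: "(nat \<Rightarrow> real^'r) \<Rightarrow> nat \<Rightarrow> nat \<Rightarrow> real" where
  "lambda_tilde \<psi> s =
    (let L = {1..<s} in
     argmin_on (\<lambda>w. \<Sum>l\<in>L. (w l)\<^sup>2)
       {w. (\<forall>l. l \<notin> L \<longrightarrow> w l = 0) \<and> (\<Sum>l\<in>L. w l) = 1
            \<and> (\<Sum>l\<in>L. w l *\<^sub>R \<psi> l) = \<psi> s})"

definition tau_step ::
  "enat set \<Rightarrow> (enat \<Rightarrow> real) \<Rightarrow> (enat \<Rightarrow> real^'r) \<Rightarrow> (nat \<Rightarrow> real^'r)
   \<Rightarrow> (enat \<Rightarrow> nat \<Rightarrow> real) \<Rightarrow> nat \<Rightarrow> nat \<Rightarrow> real" where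
  "tau_step A \<pi> \<theta> \<psi> Y a k =
    (let J = {j\<in>A. enat a < j}; L = {1..<a+k};
         \<omega> = omega_tilde A \<pi> \<theta> a; lam = lambda_tilde \<psi> (a+k) in
     (Y (enat a) (a+k) - (\<Sum>j\<in>J. \<omega> j * Y j (a+k)))
     - (\<Sum>l\<in>L. lam l * (Y (enat a) l - (\<Sum>j\<in>J. \<omega> j * Y j l))))"

definition seq_steps :: "enat set \<Rightarrow> nat \<Rightarrow> nat \<Rightarrow> (nat \<times> nat) list" where
  "seq_steps A t_star a_star =
     concat (map (\<lambda>k. map (\<lambda>a. (a, k)) (filter (\<lambda>a. enat a \<in> A) [t_star..<a_star - k + 1]))
                 [0..<a_star - t_star + 1])"

text \<open>Sequential OLS: runs the steps, overwriting Y(a,a+k) by Y(a,a+k) - tau,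
  and returns the computed estimates (0 for pairs not visited).\<close>
definition seq_ols ::
  "enat set \<Rightarrow> (enat \<Rightarrow> real) \<Rightarrow> (enat \<Rightarrow> nat \<Rightarrow> real) \<Rightarrow> (enat \<Rightarrow> real^'r)
   \<Rightarrow> (nat \<Rightarrow> real^'r) \<Rightarrow> nat \<Rightarrow> nat \<Rightarrow> enat \<Rightarrow> nat \<Rightarrow> real" where
  "seq_ols A \<pi> Y \<theta> \<psi> t_star a_star =
     snd (foldl (\<lambda>(Yc, tc) (a, k).
                   let t = tau_step A \<pi> \<theta> \<psi> Yc a k in
                   (Yc(enat a := (Yc (enat a))(a + k := Yc (enat a) (a + k) - t)),
                    tc(enat a := (tc (enat a))(k := t))))
                (Y, \<lambda>_ _. 0) (seq_steps A t_star a_star))"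

end

theory Submission
  imports Defs "HOL-Library.Product_Plus"
begin


lemma minnorm:
  fixes J :: "'j set" and p :: "'j \<Rightarrow> real" and x :: "'j \<Rightarrow> 'v::euclidean_space" and y :: 'v
  assumes finJ: "finite J" and pos: "\<forall>j\<in>J. p j > 0" and yh: "y \<in> affine hull (x ` J)"
  shows "\<exists>c0 c. argmin_on (\<lambda>w. \<Sum>j\<in>J. (w j)\<^sup>2 / p j)
       {w. (\<forall>j. j \<notin> J \<longrightarrow> w j = 0) \<and> (\<Sum>j\<in>J. w j) = 1 \<and> (\<Sum>j\<in>J. w j *\<^sub>R x j) = y}
     = (\<lambda>j. if j \<in> J then p j * (c0 + c \<bullet> x j) else 0)
     \<and> (\<Sum>j\<in>J. p j * (c0 + c \<bullet> x j)) = 1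
     \<and> (\<Sum>j\<in>J. (p j * (c0 + c \<bullet> x j)) *\<^sub>R x j) = y"
proof -
  define G :: "real \<times> 'v \<Rightarrow> real \<times> 'v" where
    "G z = (\<Sum>j\<in>J. (p j * (fst z + snd z \<bullet> x j)) *\<^sub>R (1, x j))" for z
  have linG: "linear G"
    proof (rule linearI)
    fix b1 b2 :: "real \<times> 'v"
    show "G (b1 + b2) = G b1 + G b2"
      unfolding G_def sum.distrib[symmetric]
      by (intro sum.cong refl) (simp add: algebra_simps)
  next
    fix r :: real and b :: "real \<times> 'v"
    show "G (r *\<^sub>R b) = r *\<^sub>R G b"
      unfolding G_def scaleR_sum_right scaleR_scaleR
      by (intro sum.cong refl) (simp add: inner_scaleR_left algebra_simps)
  qed
  have Gz: "z \<bullet> G z = (\<Sum>j\<in>J. p j * (fst z + snd z \<bullet> x j)\<^sup>2)" for z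
    unfolding G_def inner_sum_right
    by (intro sum.cong refl) (cases z, simp add: power2_eq_square algebra_simps)
  obtain y1 z where y1: "y1 \<in> span (range G)" and zo: "\<And>w. w \<in> span (range G) \<Longrightarrow> orthogonal z w"
    and q: "(1, y) = y1 + z"
    using orthogonal_subspace_decomp_exists by blast
  have "z \<bullet> G z = 0" using zo[of "G z"] by (simp add: span_base orthogonal_def)
  hence "(\<Sum>j\<in>J. p j * (fst z + snd z \<bullet> x j)\<^sup>2) = 0" by (simp add: Gz)
  hence "\<forall>j\<in>J. p j * (fst z + snd z \<bullet> x j)\<^sup>2 = 0"
    using sum_nonneg_eq_0_iff[OF finJ, of "\<lambda>j. p j * (fst z + snd z \<bullet> x j)\<^sup>2"] pos
    by (simp add: less_imp_le)
  hence z0: "\<forall>j\<in>J. fst z + snd z \<bullet> x j = 0" using pos by (metis less_irrefl mult_eq_0_iff power_eq_0_iff)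
  have "x ` J \<subseteq> {v. snd z \<bullet> v = - fst z}" using z0 by (auto simp: algebra_simps)
  hence "affine hull (x ` J) \<subseteq> {v. snd z \<bullet> v = - fst z}"
    by (rule hull_minimal) (rule affine_hyperplane)
  hence zq: "z \<bullet> (1, y) = 0" using yh by (cases z) auto
  have "z \<bullet> y1 = 0" using zo[OF y1] by (simp add: orthogonal_def)
  hence "z \<bullet> z = 0" using zq q by (simp add: inner_add_right)
  hence "z = 0" by simp
  hence "(1, y) \<in> span (range G)" using q y1 by simp
  hence "(1, y) \<in> range G" using span_linear_image[OF linG, of UNIV] by simp
  then obtain zz where zz: "G zz = (1, y)" by (metis rangeE)
  define c0 where "c0 = fst zz"
  define c where "c = snd zz"
  define ws where "ws = (\<lambda>j. if j \<in> J then p j * (c0 + c \<bullet> x j) else 0)"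
  have s1: "(\<Sum>j\<in>J. p j * (c0 + c \<bullet> x j)) = 1"
  proof -
    have "fst (G zz) = (\<Sum>j\<in>J. p j * (c0 + c \<bullet> x j))"
      unfolding G_def fst_sum c0_def c_def by simp
    thus ?thesis using zz by simp
  qed
  have s2: "(\<Sum>j\<in>J. (p j * (c0 + c \<bullet> x j)) *\<^sub>R x j) = y"
  proof -
    have "snd (G zz) = (\<Sum>j\<in>J. (p j * (c0 + c \<bullet> x j)) *\<^sub>R x j)"
      unfolding G_def snd_sum c0_def c_def by simp
    thus ?thesis using zz by simp
  qed
  let ?F = "(\<lambda>w. \<Sum>j\<in>J. (w j)\<^sup>2 / p j)"
  let ?S = "{w. (\<forall>j. j \<notin> J \<longrightarrow> w j = 0) \<and> (\<Sum>j\<in>J. w j) = 1 \<and> (\<Sum>j\<in>J. w j *\<^sub>R x j) = y}"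
  have wsS: "ws \<in> ?S" using s1 s2 by (simp add: ws_def)
  have key: "?F w = ?F ws + (\<Sum>j\<in>J. (w j - ws j)\<^sup>2 / p j)" if "w \<in> ?S" for w
  proof -
    have D: "(\<Sum>j\<in>J. (w j - ws j) * (c0 + c \<bullet> x j)) = 0"
    proof -
      have "(\<Sum>j\<in>J. (w j - ws j) * (c0 + c \<bullet> x j))
          = c0 * ((\<Sum>j\<in>J. w j) - (\<Sum>j\<in>J. ws j)) + c \<bullet> ((\<Sum>j\<in>J. w j *\<^sub>R x j) - (\<Sum>j\<in>J. ws j *\<^sub>R x j))"
        by (simp add: algebra_simps sum.distrib sum_subtractf sum_distrib_left inner_sum_right inner_diff_right)
      also have "\<dots> = 0" using that wsS by simp
      finally show ?thesis .
    qed
    have "?F w = (\<Sum>j\<in>J. (ws j)\<^sup>2 / p j + (w j - ws j)\<^sup>2 / p j + 2 * ((w j - ws j) * (c0 + c \<bullet> x j)))"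
    proof (intro sum.cong refl)
      fix j assume j: "j \<in> J"
      hence pj: "p j > 0" using pos by auto
      have "ws j = p j * (c0 + c \<bullet> x j)" using j by (simp add: ws_def)
      thus "(w j)\<^sup>2 / p j = (ws j)\<^sup>2 / p j + (w j - ws j)\<^sup>2 / p j + 2 * ((w j - ws j) * (c0 + c \<bullet> x j))"
        using pj by (simp add: field_simps power2_eq_square)
    qed
    also have "\<dots> = ?F ws + (\<Sum>j\<in>J. (w j - ws j)\<^sup>2 / p j) + 2 * (\<Sum>j\<in>J. (w j - ws j) * (c0 + c \<bullet> x j))"
      by (simp add: sum.distrib sum_distrib_left)
    finally show ?thesis using D by simp
  qed
  have nn: "(\<Sum>j\<in>J. (w j - ws j)\<^sup>2 / p j) \<ge> 0" for w
    using pos by (intro sum_nonneg) (simp add: less_imp_le)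
  have "argmin_on ?F ?S = ws"
    unfolding argmin_on_def
  proof (rule the_equality)
    show "ws \<in> ?S \<and> (\<forall>w\<in>?S. ?F ws \<le> ?F w)" 
    proof (intro conjI ballI wsS)
      fix w assume "w \<in> ?S"
      thus "?F ws \<le> ?F w" using key[of w] nn[of w] by linarith
    qed
  next
    fix w assume w: "w \<in> ?S \<and> (\<forall>v\<in>?S. ?F w \<le> ?F v)"
    hence "?F w \<le> ?F ws" using wsS by blast
    hence "(\<Sum>j\<in>J. (w j - ws j)\<^sup>2 / p j) = 0" using key[of w] w nn[of w] by linarith
    hence "\<forall>j\<in>J. (w j - ws j)\<^sup>2 / p j = 0"
      using sum_nonneg_eq_0_iff[OF finJ, of "\<lambda>j. (w j - ws j)\<^sup>2 / p j"] pos by (simp add: less_imp_le)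
    hence "\<forall>j\<in>J. w j = ws j" using pos by (metis less_irrefl divide_eq_0_iff power_eq_0_iff right_minus_eq)
    moreover have "\<forall>j. j \<notin> J \<longrightarrow> w j = ws j" using w by (simp add: ws_def)
    ultimately show "w = ws" by blast
  qed
  thus ?thesis using s1 s2 unfolding ws_def by blast
qed



definition fv :: "(enat \<Rightarrow> real^'r) \<Rightarrow> (nat \<Rightarrow> real^'r) \<Rightarrow> (enat \<Rightarrow> real) \<Rightarrow> (nat \<Rightarrow> real)
   \<Rightarrow> (nat \<Rightarrow> real^'r) \<Rightarrow> (enat \<Rightarrow> real^'r) \<Rightarrow> enat \<Rightarrow> nat \<Rightarrow> real" where
  "fv \<theta> \<psi> \<alpha> \<beta> \<phi> \<nu> a t = \<alpha> a + \<beta> t + \<theta> a \<bullet> \<phi> t + \<nu> a \<bullet> \<psi> t"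

definition trt :: "(enat \<Rightarrow> nat \<Rightarrow> real) \<Rightarrow> enat \<Rightarrow> nat \<Rightarrow> real" where
  "trt \<tau> a t = (if a \<le> enat t then \<tau> a (t - the_enat a) else 0)"

definition res where
  "res Y \<theta> \<psi> \<alpha> \<beta> \<phi> \<nu> \<tau> a t = Y a t - fv \<theta> \<psi> \<alpha> \<beta> \<phi> \<nu> a t - trt \<tau> a t"

lemma ssr_res: "ssr A T \<pi> Y \<theta> \<psi> \<alpha> \<beta> \<phi> \<nu> \<tau> =
   (\<Sum>a\<in>A. \<Sum>t=1..T. \<pi> a * (res Y \<theta> \<psi> \<alpha> \<beta> \<phi> \<nu> \<tau> a t)\<^sup>2)"
  unfolding ssr_def res_def fv_def trt_def by (simp add: algebra_simps)

lemma E0: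
  assumes min: "is_ols_minimizer A T \<pi> Y \<theta> \<psi> \<alpha> \<beta> \<phi> \<nu> \<tau>" and finA: "finite A"
    and aA: "a \<in> A" and pa: "\<pi> a > 0" and t: "t \<in> {1..T}" and at: "a \<le> enat t"
  shows "res Y \<theta> \<psi> \<alpha> \<beta> \<phi> \<nu> \<tau> a t = 0"
proof -
  obtain m where am: "a = enat m" using at by (cases a) auto
  have mt: "m \<le> t" using at am by simp
  let ?r = "res Y \<theta> \<psi> \<alpha> \<beta> \<phi> \<nu> \<tau>"
  define \<tau>' where "\<tau>' = \<tau>(a := (\<tau> a)(t - m := \<tau> a (t - m) + ?r a t))"
  have cell: "res Y \<theta> \<psi> \<alpha> \<beta> \<phi> \<nu> \<tau>' a' t' = ?r a' t' - (if a' = a \<and> t' = t then ?r a t else 0)" for a' t'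
  proof -
    have "trt \<tau>' a' t' = trt \<tau> a' t' + (if a' = a \<and> t' = t then ?r a t else 0)"
    proof (cases "a' = a")
      case True
      show ?thesis
      proof (cases "m \<le> t'")
        case True
        hence "(t' - m = t - m) = (t' = t)" using mt by auto
        thus ?thesis using True \<open>a' = a\<close> am by (auto simp: trt_def \<tau>'_def)
      next
        case False
        thus ?thesis using \<open>a' = a\<close> am mt by (auto simp: trt_def \<tau>'_def)
      qed
    next
      case False
      thus ?thesis by (simp add: trt_def \<tau>'_def)
    qed
    thus ?thesis by (simp add: res_def)
  qed
  have "ssr A T \<pi> Y \<theta> \<psi> \<alpha> \<beta> \<phi> \<nu> \<tau>' =
     (\<Sum>a'\<in>A. \<Sum>t'=1..T. \<pi> a' * (?r a' t')\<^sup>2 - (if a' = a then (if t' = t then \<pi> a * (?r a t)\<^sup>2 else 0) else 0))"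
    unfolding ssr_res cell by (intro sum.cong refl) auto
  also have "\<dots> = ssr A T \<pi> Y \<theta> \<psi> \<alpha> \<beta> \<phi> \<nu> \<tau> - \<pi> a * (?r a t)\<^sup>2"
  proof -
    have "\<And>a'. (\<Sum>t'=1..T. (if a' = a then (if t' = t then \<pi> a * (?r a t)\<^sup>2 else 0) else 0))
       = (if a' = a then \<pi> a * (?r a t)\<^sup>2 else 0)" using t by auto
    thus ?thesis using aA finA by (simp add: ssr_res sum_subtractf)
  qed
  finally have "ssr A T \<pi> Y \<theta> \<psi> \<alpha> \<beta> \<phi> \<nu> \<tau>' = ssr A T \<pi> Y \<theta> \<psi> \<alpha> \<beta> \<phi> \<nu> \<tau> - \<pi> a * (?r a t)\<^sup>2" .
  moreover have "ssr A T \<pi> Y \<theta> \<psi> \<alpha> \<beta> \<phi> \<nu> \<tau> \<le> ssr A T \<pi> Y \<theta> \<psi> \<alpha> \<beta> \<phi> \<nu> \<tau>'"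
    using min unfolding is_ols_minimizer_def by blast
  ultimately have "\<pi> a * (?r a t)\<^sup>2 \<le> 0" by simp
  moreover have "\<pi> a * (?r a t)\<^sup>2 \<ge> 0" using pa by simp
  ultimately have "\<pi> a * (?r a t)\<^sup>2 = 0" by linarith
  thus ?thesis using pa by simp
qed

lemma normal:
  assumes min: "is_ols_minimizer A T \<pi> Y \<theta> \<psi> \<alpha> \<beta> \<phi> \<nu> \<tau>"
    and pos: "\<forall>a\<in>A. \<pi> a > 0"
  shows "(\<Sum>a\<in>A. \<Sum>t=1..T. \<pi> a * res Y \<theta> \<psi> \<alpha> \<beta> \<phi> \<nu> \<tau> a t *
            (\<alpha>2 a + \<beta>2 t + \<theta> a \<bullet> \<phi>2 t + \<nu>2 a \<bullet> \<psi> t)) = 0"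
proof -
  let ?r = "res Y \<theta> \<psi> \<alpha> \<beta> \<phi> \<nu> \<tau>"
  define g where "g a t = \<alpha>2 a + \<beta>2 t + \<theta> a \<bullet> \<phi>2 t + \<nu>2 a \<bullet> \<psi> t" for a t
  define B where "B = (\<Sum>a\<in>A. \<Sum>t=1..T. \<pi> a * ?r a t * g a t)"
  define C where "C = (\<Sum>a\<in>A. \<Sum>t=1..T. \<pi> a * (g a t)\<^sup>2)"
  define S0 where "S0 = (\<Sum>a\<in>A. \<Sum>t=1..T. \<pi> a * (?r a t)\<^sup>2)"
  have C0: "C \<ge> 0" unfolding C_def using pos by (intro sum_nonneg) (simp add: less_imp_le)
  have pert: "ssr A T \<pi> Y \<theta> \<psi> (\<lambda>a. \<alpha> a + e * \<alpha>2 a) (\<lambda>t. \<beta> t + e * \<beta>2 t)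
       (\<lambda>t. \<phi> t + e *\<^sub>R \<phi>2 t) (\<lambda>a. \<nu> a + e *\<^sub>R \<nu>2 a) \<tau> = S0 - 2 * e * B + e\<^sup>2 * C" for e
  proof -
    have "ssr A T \<pi> Y \<theta> \<psi> (\<lambda>a. \<alpha> a + e * \<alpha>2 a) (\<lambda>t. \<beta> t + e * \<beta>2 t)
       (\<lambda>t. \<phi> t + e *\<^sub>R \<phi>2 t) (\<lambda>a. \<nu> a + e *\<^sub>R \<nu>2 a) \<tau>
      = (\<Sum>a\<in>A. \<Sum>t=1..T. \<pi> a * (?r a t)\<^sup>2 - 2 * e * (\<pi> a * ?r a t * g a t) + e\<^sup>2 * (\<pi> a * (g a t)\<^sup>2))"
      unfolding ssr_res
      by (intro sum.cong refl)
        (simp add: res_def fv_def g_def inner_add_right inner_add_left power2_eq_square algebra_simps)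
    also have "\<dots> = S0 - 2 * e * B + e\<^sup>2 * C"
      by (simp add: S0_def B_def C_def sum.distrib sum_subtractf sum_distrib_left)
    finally show ?thesis .
  qed
  define e where "e = B / (C + 1)"
  have "ssr A T \<pi> Y \<theta> \<psi> \<alpha> \<beta> \<phi> \<nu> \<tau> \<le> ssr A T \<pi> Y \<theta> \<psi> (\<lambda>a. \<alpha> a + e * \<alpha>2 a) (\<lambda>t. \<beta> t + e * \<beta>2 t)
       (\<lambda>t. \<phi> t + e *\<^sub>R \<phi>2 t) (\<lambda>a. \<nu> a + e *\<^sub>R \<nu>2 a) \<tau>"
    using min unfolding is_ols_minimizer_def by blast
  hence "S0 \<le> S0 - 2 * e * B + e\<^sup>2 * C" unfolding pert by (simp add: S0_def ssr_res)
  hence X: "0 \<le> - 2 * e * B + e\<^sup>2 * C" by simp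
  have C1: "C + 1 > 0" using C0 by simp
  have h: "e * (C + 1) = B" using C1 by (simp add: e_def)
  have "(- 2 * e * B + e\<^sup>2 * C) * (C + 1)\<^sup>2 = -2*B*(e*(C+1))*(C+1) + C*(e*(C+1))\<^sup>2"
    by (simp add: power2_eq_square algebra_simps)
  also have "\<dots> = - (B\<^sup>2 * (C + 2))" unfolding h by (simp add: power2_eq_square algebra_simps)
  finally have "(- 2 * e * B + e\<^sup>2 * C) * (C + 1)\<^sup>2 = - (B\<^sup>2 * (C + 2))" .
  moreover have "(- 2 * e * B + e\<^sup>2 * C) * (C + 1)\<^sup>2 \<ge> 0" using X by simp
  ultimately have "B\<^sup>2 * (C + 2) \<le> 0" by linarith
  moreover have "C + 2 > 0" using C0 by simp
  ultimately have "B\<^sup>2 \<le> 0" by (simp add: mult_le_0_iff)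
  hence "B = 0" by simp
  thus ?thesis unfolding B_def g_def .
qed

lemma E1:
  assumes min: "is_ols_minimizer A T \<pi> Y \<theta> \<psi> \<alpha> \<beta> \<phi> \<nu> \<tau>"
    and pos: "\<forall>a\<in>A. \<pi> a > 0" and t0: "t0 \<in> {1..T}"
  shows "(\<Sum>a\<in>A. \<pi> a * res Y \<theta> \<psi> \<alpha> \<beta> \<phi> \<nu> \<tau> a t0 * (c0 + c \<bullet> \<theta> a)) = 0"
proof -
  have "(\<Sum>a\<in>A. \<Sum>t=1..T. \<pi> a * res Y \<theta> \<psi> \<alpha> \<beta> \<phi> \<nu> \<tau> a t *
            (0 + (if t = t0 then c0 else 0) + \<theta> a \<bullet> (if t = t0 then c else 0) + 0 \<bullet> \<psi> t)) = 0"
    by (rule normal[OF min pos, where ?\<alpha>2.0="\<lambda>_. 0" and ?\<beta>2.0="\<lambda>t. if t = t0 then c0 else 0"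
       and ?\<phi>2.0="\<lambda>t. if t = t0 then c else 0" and ?\<nu>2.0="\<lambda>_. 0"])
  moreover have "(\<Sum>a\<in>A. \<Sum>t=1..T. \<pi> a * res Y \<theta> \<psi> \<alpha> \<beta> \<phi> \<nu> \<tau> a t *
            (0 + (if t = t0 then c0 else 0) + \<theta> a \<bullet> (if t = t0 then c else 0) + 0 \<bullet> \<psi> t))
     = (\<Sum>a\<in>A. \<Sum>t=1..T. if t = t0 then \<pi> a * res Y \<theta> \<psi> \<alpha> \<beta> \<phi> \<nu> \<tau> a t0 * (c0 + c \<bullet> \<theta> a) else 0)"
    by (intro sum.cong refl) (simp add: inner_commute)
  moreover have "\<dots> = (\<Sum>a\<in>A. \<pi> a * res Y \<theta> \<psi> \<alpha> \<beta> \<phi> \<nu> \<tau> a t0 * (c0 + c \<bullet> \<theta> a))"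
    using t0 by simp
  ultimately show ?thesis by simp
qed

lemma E2:
  assumes min: "is_ols_minimizer A T \<pi> Y \<theta> \<psi> \<alpha> \<beta> \<phi> \<nu> \<tau>"
    and pos: "\<forall>a\<in>A. \<pi> a > 0" and a0: "a0 \<in> A" and finA: "finite A"
  shows "(\<Sum>t=1..T. res Y \<theta> \<psi> \<alpha> \<beta> \<phi> \<nu> \<tau> a0 t * (c0 + c \<bullet> \<psi> t)) = 0"
proof -
  have "(\<Sum>a\<in>A. \<Sum>t=1..T. \<pi> a * res Y \<theta> \<psi> \<alpha> \<beta> \<phi> \<nu> \<tau> a t *
            ((if a = a0 then c0 else 0) + 0 + \<theta> a \<bullet> 0 + (if a = a0 then c else 0) \<bullet> \<psi> t)) = 0"
    by (rule normal[OF min pos, where ?\<alpha>2.0="\<lambda>a. if a = a0 then c0 else 0" and ?\<beta>2.0="\<lambda>_. 0"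
       and ?\<phi>2.0="\<lambda>_. 0" and ?\<nu>2.0="\<lambda>a. if a = a0 then c else 0"])
  moreover have "(\<Sum>a\<in>A. \<Sum>t=1..T. \<pi> a * res Y \<theta> \<psi> \<alpha> \<beta> \<phi> \<nu> \<tau> a t *
            ((if a = a0 then c0 else 0) + 0 + \<theta> a \<bullet> 0 + (if a = a0 then c else 0) \<bullet> \<psi> t))
     = (\<Sum>a\<in>A. if a = a0 then \<pi> a0 * (\<Sum>t=1..T. res Y \<theta> \<psi> \<alpha> \<beta> \<phi> \<nu> \<tau> a0 t * (c0 + c \<bullet> \<psi> t)) else 0)"
    by (intro sum.cong refl) (simp add: sum_distrib_left mult.assoc)
  moreover have "\<dots> = \<pi> a0 * (\<Sum>t=1..T. res Y \<theta> \<psi> \<alpha> \<beta> \<phi> \<nu> \<tau> a0 t * (c0 + c \<bullet> \<psi> t))"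
    using a0 finA by simp
  moreover have "\<pi> a0 > 0" using pos a0 by blast
  ultimately show ?thesis by simp
qed



lemma key:
  fixes e f :: "enat \<Rightarrow> nat \<Rightarrow> real" and Yc :: "enat \<Rightarrow> nat \<Rightarrow> real"
    and \<theta> :: "enat \<Rightarrow> real^'r" and \<psi> :: "nat \<Rightarrow> real^'r"
  assumes finA: "finite A" and pos: "\<forall>a\<in>A. \<pi> a > 0"
    and nA: "enat n \<in> A" and s: "s = n + k" and s1: "1 \<le> s" and sT: "s \<le> T"
    and E0: "\<forall>a\<in>A. \<forall>t\<in>{1..T}. a \<le> enat t \<longrightarrow> e a t = 0"
    and E1: "\<forall>t\<in>{1..T}. \<forall>c0 c. (\<Sum>a\<in>A. \<pi> a * e a t * (c0 + c \<bullet> \<theta> a)) = 0"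
    and E2: "\<forall>a\<in>A. \<forall>c0 c. (\<Sum>t=1..T. e a t * (c0 + c \<bullet> \<psi> t)) = 0"
    and fdef: "\<forall>a t. f a t = \<alpha> a + \<beta> t + \<theta> a \<bullet> \<phi> t + \<nu> a \<bullet> \<psi> t"
    and om: "\<forall>j\<in>{j\<in>A. enat n < j}. omega_tilde A \<pi> \<theta> n j = \<pi> j * (u0 + u \<bullet> \<theta> j)"
    and om1: "(\<Sum>j\<in>{j\<in>A. enat n < j}. omega_tilde A \<pi> \<theta> n j) = 1"
    and om2: "(\<Sum>j\<in>{j\<in>A. enat n < j}. omega_tilde A \<pi> \<theta> n j *\<^sub>R \<theta> j) = \<theta> (enat n)"
    and la: "\<forall>l\<in>{1..<s}. lambda_tilde \<psi> s l = v0 + v \<bullet> \<psi> l"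
    and la1: "(\<Sum>l\<in>{1..<s}. lambda_tilde \<psi> s l) = 1"
    and la2: "(\<Sum>l\<in>{1..<s}. lambda_tilde \<psi> s l *\<^sub>R \<psi> l) = \<psi> s"
    and Yc: "\<forall>a'\<in>insert (enat n) {j\<in>A. enat n < j}. \<forall>t\<in>{1..s}.
               Yc a' t = f a' t + e a' t + (if a' = enat n \<and> t = s then \<tau>0 else 0)"
  shows "tau_step A \<pi> \<theta> \<psi> Yc n k = \<tau>0"
proof -
  define J where "J = {j\<in>A. enat n < j}"
  define K where "K = {j\<in>A. j \<le> enat n}"
  define L where "L = {1..<s}"
  define \<omega> where "\<omega> = omega_tilde A \<pi> \<theta> n"
  define lam where "lam = lambda_tilde \<psi> s"
  have finJ: "finite J" and finK: "finite K" using finA by (auto simp: J_def K_def)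
  have AJK: "A = J \<union> K" and JK: "J \<inter> K = {}" by (auto simp: J_def K_def not_less)
  have nK: "enat n \<in> K" using nA by (simp add: K_def)
  define d where "d t = Yc (enat n) t - (\<Sum>j\<in>J. \<omega> j * Yc j t)" for t
  define df where "df t = f (enat n) t - (\<Sum>j\<in>J. \<omega> j * f j t)" for t
  define de where "de t = e (enat n) t - (\<Sum>j\<in>J. \<omega> j * e j t)" for t
  have ts: "tau_step A \<pi> \<theta> \<psi> Yc n k = d s - (\<Sum>l\<in>L. lam l * d l)"
    by (simp add: tau_step_def Let_def J_def L_def \<omega>_def lam_def d_def s)
  have dd: "d t = df t + de t + (if t = s then \<tau>0 else 0)" if t: "t \<in> {1..s}" for t
  proof -
    have "(\<Sum>j\<in>J. \<omega> j * Yc j t) = (\<Sum>j\<in>J. \<omega> j * f j t + \<omega> j * e j t)"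
    proof (intro sum.cong refl)
      fix j assume j: "j \<in> J"
      hence "j \<noteq> enat n" by (auto simp: J_def)
      thus "\<omega> j * Yc j t = \<omega> j * f j t + \<omega> j * e j t" using Yc t j by (simp add: J_def algebra_simps)
    qed
    moreover have "Yc (enat n) t = f (enat n) t + e (enat n) t + (if t = s then \<tau>0 else 0)"
      using Yc t by simp
    ultimately show ?thesis by (simp add: d_def df_def de_def sum.distrib)
  qed
  define P where "P = \<alpha> (enat n) - (\<Sum>j\<in>J. \<omega> j * \<alpha> j)"
  define Q where "Q = \<nu> (enat n) - (\<Sum>j\<in>J. \<omega> j *\<^sub>R \<nu> j)"
  have dfe: "df t = P + Q \<bullet> \<psi> t" for t
  proof -
    have "(\<Sum>j\<in>J. \<omega> j * f j t) = (\<Sum>j\<in>J. \<omega> j * \<alpha> j + \<omega> j * \<beta> t + (\<omega> j *\<^sub>R \<theta> j) \<bullet> \<phi> t + (\<omega> j *\<^sub>R \<nu> j) \<bullet> \<psi> t)"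
      by (intro sum.cong refl) (simp add: fdef algebra_simps)
    also have "\<dots> = (\<Sum>j\<in>J. \<omega> j * \<alpha> j) + (\<Sum>j\<in>J. \<omega> j) * \<beta> t + (\<Sum>j\<in>J. \<omega> j *\<^sub>R \<theta> j) \<bullet> \<phi> t
         + (\<Sum>j\<in>J. \<omega> j *\<^sub>R \<nu> j) \<bullet> \<psi> t"
      by (simp add: sum.distrib sum_distrib_right inner_sum_left)
    also have "\<dots> = (\<Sum>j\<in>J. \<omega> j * \<alpha> j) + \<beta> t + \<theta> (enat n) \<bullet> \<phi> t + (\<Sum>j\<in>J. \<omega> j *\<^sub>R \<nu> j) \<bullet> \<psi> t"
      using om1 om2 by (simp add: J_def \<omega>_def)
    finally show ?thesis by (simp add: df_def P_def Q_def fdef inner_diff_left)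
  qed
  define wK where "wK a' = (if a' = enat n then 1 else 0) + \<pi> a' * (u0 + u \<bullet> \<theta> a')" for a'
  have deK: "de t = (\<Sum>a'\<in>K. wK a' * e a' t)" if t: "t \<in> {1..T}" for t
  proof -
    have "(\<Sum>j\<in>J. \<omega> j * e j t) = (\<Sum>j\<in>J. \<pi> j * e j t * (u0 + u \<bullet> \<theta> j))"
      by (intro sum.cong refl) (use om in \<open>simp add: J_def \<omega>_def\<close>)
    also have "\<dots> = - (\<Sum>j\<in>K. \<pi> j * e j t * (u0 + u \<bullet> \<theta> j))"
    proof -
      have "(\<Sum>j\<in>A. \<pi> j * e j t * (u0 + u \<bullet> \<theta> j)) = 0" using E1 t by blast
      thus ?thesis unfolding AJK
        using sum.union_disjoint[OF finJ finK JK, of "\<lambda>j. \<pi> j * e j t * (u0 + u \<bullet> \<theta> j)"] by linarith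
    qed
    finally have 1: "(\<Sum>j\<in>J. \<omega> j * e j t) = - (\<Sum>j\<in>K. \<pi> j * e j t * (u0 + u \<bullet> \<theta> j))" .
    have 2: "e (enat n) t = (\<Sum>a'\<in>K. (if a' = enat n then 1 else 0) * e a' t)"
    proof -
      have "(\<Sum>a'\<in>K. (if a' = enat n then 1 else 0) * e a' t) = (\<Sum>a'\<in>K. if a' = enat n then e a' t else 0)"
        by (intro sum.cong) auto
      thus ?thesis using nK finK by simp
    qed
    show ?thesis unfolding de_def 1 2 wK_def
      by (simp add: sum.distrib[symmetric] algebra_simps)
  qed
  have Bz: "e a' s - (\<Sum>l\<in>L. lam l * e a' l) = 0" if a': "a' \<in> K" for a'
  proof -
    have a'A: "a' \<in> A" and a'n: "a' \<le> enat n" using a' by (auto simp: K_def)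
    have z: "e a' t = 0" if "t \<in> {s..T}" for t
    proof -
      have "a' \<le> enat t" using a'n that s by (metis atLeastAtMost_iff enat_ord_simps(1) le_add1 order_trans)
      moreover have "t \<in> {1..T}" using that s1 by auto
      ultimately show ?thesis using E0 a'A by blast
    qed
    have es: "e a' s = 0" using z sT by simp
    have "(\<Sum>t=1..T. e a' t * (v0 + v \<bullet> \<psi> t)) = 0" using E2 a'A by blast
    moreover have "{1..T} = L \<union> {s..T}" using s1 sT by (auto simp: L_def)
    moreover have "L \<inter> {s..T} = {}" by (auto simp: L_def)
    ultimately have "(\<Sum>t\<in>L. e a' t * (v0 + v \<bullet> \<psi> t)) + (\<Sum>t\<in>{s..T}. e a' t * (v0 + v \<bullet> \<psi> t)) = 0"
      by (metis finite_atLeastAtMost finite_atLeastLessThan L_def sum.union_disjoint)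
    moreover have "(\<Sum>t\<in>{s..T}. e a' t * (v0 + v \<bullet> \<psi> t)) = 0" using z by simp
    moreover have "(\<Sum>l\<in>L. lam l * e a' l) = (\<Sum>t\<in>L. e a' t * (v0 + v \<bullet> \<psi> t))"
      by (intro sum.cong refl) (use la in \<open>simp add: L_def lam_def\<close>)
    ultimately show ?thesis using es by simp
  qed
  have sL: "s \<notin> L" by (simp add: L_def)
  have LT: "\<forall>l\<in>L. l \<in> {1..s} \<and> l \<in> {1..T}" using sT by (auto simp: L_def)
  have "(\<Sum>l\<in>L. lam l * d l) = (\<Sum>l\<in>L. lam l * df l) + (\<Sum>l\<in>L. lam l * de l)"
  proof -
    have "(\<Sum>l\<in>L. lam l * d l) = (\<Sum>l\<in>L. lam l * df l + lam l * de l)"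
      by (intro sum.cong refl) (use dd LT sL in \<open>auto simp: algebra_simps\<close>)
    thus ?thesis by (simp add: sum.distrib)
  qed
  moreover have "(\<Sum>l\<in>L. lam l * df l) = df s"
  proof -
    have "(\<Sum>l\<in>L. lam l * df l) = (\<Sum>l\<in>L. lam l) * P + Q \<bullet> (\<Sum>l\<in>L. lam l *\<^sub>R \<psi> l)"
      by (simp add: dfe sum.distrib sum_distrib_left inner_sum_right algebra_simps)
    thus ?thesis using la1 la2 by (simp add: L_def lam_def dfe)
  qed
  moreover have "(\<Sum>l\<in>L. lam l * de l) = de s"
  proof -
    have "(\<Sum>l\<in>L. lam l * de l) = (\<Sum>l\<in>L. \<Sum>a'\<in>K. wK a' * (lam l * e a' l))"
      by (intro sum.cong refl) (use deK LT in \<open>simp add: sum_distrib_left algebra_simps\<close>)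
    also have "\<dots> = (\<Sum>a'\<in>K. wK a' * (\<Sum>l\<in>L. lam l * e a' l))"
      by (subst sum.swap) (simp add: sum_distrib_left)
    also have "\<dots> = (\<Sum>a'\<in>K. wK a' * e a' s)"
      by (intro sum.cong refl) (use Bz in \<open>simp add: algebra_simps\<close>)
    also have "\<dots> = de s" using deK[of s] s1 sT by simp
    finally show ?thesis .
  qed
  moreover have "d s = df s + de s + \<tau>0" using dd[of s] s1 by simp
  ultimately show ?thesis using ts by simp
qed



definition YP :: "(enat \<Rightarrow> nat \<Rightarrow> real) \<Rightarrow> (enat \<Rightarrow> nat \<Rightarrow> real) \<Rightarrow> (nat \<times> nat) set \<Rightarrow> enat \<Rightarrow> nat \<Rightarrow> real" where
  "YP Y \<tau> S a' t = Y a' t - (if \<exists>m. a' = enat m \<and> m \<le> t \<and> (m, t - m) \<in> S then \<tau> a' (t - the_enat a') else 0)"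

definition TP :: "(enat \<Rightarrow> nat \<Rightarrow> real) \<Rightarrow> (nat \<times> nat) set \<Rightarrow> enat \<Rightarrow> nat \<Rightarrow> real" where
  "TP \<tau> S a' k = (if \<exists>m. a' = enat m \<and> (m, k) \<in> S then \<tau> a' k else 0)"

definition stepF where
  "stepF A \<pi> \<theta> \<psi> = (\<lambda>(Yc, tc) (a, k).
                   let t = tau_step A \<pi> \<theta> \<psi> Yc a k in
                   (Yc(enat a := (Yc (enat a))(a + k := Yc (enat a) (a + k) - t)),
                    tc(enat a := (tc (enat a))(k := t))))"

lemma seq_ols_alt: "seq_ols A \<pi> Y \<theta> \<psi> t_star a_star =
   snd (foldl (stepF A \<pi> \<theta> \<psi>) (Y, \<lambda>_ _. 0) (seq_steps A t_star a_star))"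
  unfolding seq_ols_def stepF_def ..

lemma YP_insert:
  assumes "(n, k) \<notin> S"
  shows "YP Y \<tau> (insert (n, k) S) =
    (YP Y \<tau> S)(enat n := (YP Y \<tau> S (enat n))(n + k := YP Y \<tau> S (enat n) (n + k) - \<tau> (enat n) k))"
proof (intro ext)
  fix a' t
  show "YP Y \<tau> (insert (n, k) S) a' t =
    ((YP Y \<tau> S)(enat n := (YP Y \<tau> S (enat n))(n + k := YP Y \<tau> S (enat n) (n + k) - \<tau> (enat n) k))) a' t"
  proof (cases "a' = enat n")
    case True
    show ?thesis
    proof (cases "t = n + k")
      case True
      thus ?thesis using \<open>a' = enat n\<close> assms by (auto simp: YP_def)
    next
      case False
      hence "\<not> (n \<le> t \<and> t - n = k)" by auto
      thus ?thesis using \<open>a' = enat n\<close> False by (auto simp: YP_def)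
    qed
  next
    case False
    thus ?thesis by (auto simp: YP_def)
  qed
qed

lemma TP_insert:
  "TP \<tau> (insert (n, k) S) = (TP \<tau> S)(enat n := (TP \<tau> S (enat n))(k := \<tau> (enat n) k))"
  by (intro ext) (auto simp: TP_def)

lemma fold_inv:
  assumes "distinct xs" "set xs \<inter> S = {}"
    and "\<forall>x\<in>set xs. \<forall>S'. S \<subseteq> S' \<and> x \<notin> S' \<longrightarrow>
            tau_step A \<pi> \<theta> \<psi> (YP Y \<tau> S') (fst x) (snd x) = \<tau> (enat (fst x)) (snd x)"
  shows "foldl (stepF A \<pi> \<theta> \<psi>) (YP Y \<tau> S, TP \<tau> S) xs = (YP Y \<tau> (S \<union> set xs), TP \<tau> (S \<union> set xs))"
  using assms
proof (induction xs arbitrary: S)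
  case Nil
  then show ?case by simp
next
  case (Cons x xs)
  obtain n k where x: "x = (n, k)" by (cases x)
  have xS: "(n, k) \<notin> S" using Cons.prems x by auto
  have t: "tau_step A \<pi> \<theta> \<psi> (YP Y \<tau> S) n k = \<tau> (enat n) k"
    using Cons.prems(3) x xS by auto
  have "stepF A \<pi> \<theta> \<psi> (YP Y \<tau> S, TP \<tau> S) x = (YP Y \<tau> (insert x S), TP \<tau> (insert x S))"
    unfolding x stepF_def using t YP_insert[OF xS] TP_insert by (simp add: Let_def)
  moreover have "foldl (stepF A \<pi> \<theta> \<psi>) (YP Y \<tau> (insert x S), TP \<tau> (insert x S)) xs
     = (YP Y \<tau> (insert x S \<union> set xs), TP \<tau> (insert x S \<union> set xs))"
    using Cons.prems by (intro Cons.IH) auto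
  ultimately show ?case by simp
qed

lemma Yc_ok:
  assumes nA: "enat n \<in> A" and nS: "(n, k) \<notin> S'"
    and need: "\<forall>m k'. enat m \<in> A \<and> n \<le> m \<and> k' < k \<and> m + k' \<le> n + k \<longrightarrow> (m, k') \<in> S'"
  shows "\<forall>a'\<in>insert (enat n) {j\<in>A. enat n < j}. \<forall>t\<in>{1..n+k}.
     YP Y \<tau> S' a' t = fv \<theta> \<psi> \<alpha> \<beta> \<phi> \<nu> a' t + res Y \<theta> \<psi> \<alpha> \<beta> \<phi> \<nu> \<tau> a' t
        + (if a' = enat n \<and> t = n + k then \<tau> (enat n) k else 0)"
proof (intro ballI)
  fix a' t assume a': "a' \<in> insert (enat n) {j\<in>A. enat n < j}" and t: "t \<in> {1..n+k}"
  have Y: "Y a' t = fv \<theta> \<psi> \<alpha> \<beta> \<phi> \<nu> a' t + res Y \<theta> \<psi> \<alpha> \<beta> \<phi> \<nu> \<tau> a' t + trt \<tau> a' t"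
    by (simp add: res_def)
  show "YP Y \<tau> S' a' t = fv \<theta> \<psi> \<alpha> \<beta> \<phi> \<nu> a' t + res Y \<theta> \<psi> \<alpha> \<beta> \<phi> \<nu> \<tau> a' t
        + (if a' = enat n \<and> t = n + k then \<tau> (enat n) k else 0)"
  proof (cases a')
    case infinity
    thus ?thesis using Y by (simp add: YP_def trt_def)
  next
    case (enat m)
    have mA: "enat m \<in> A" and nm: "n \<le> m" using a' enat nA by auto
    show ?thesis
    proof (cases "m \<le> t")
      case mt: True
      show ?thesis
      proof (cases "m = n \<and> t = n + k")
        case True
        thus ?thesis using Y enat nS by (auto simp: YP_def trt_def)
      next
        case False
        have "t - m < k"
        proof (cases "m = n")
          case True
          thus ?thesis using False t mt by auto
        next
          case False
          thus ?thesis using nm t mt by auto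
        qed
        hence "(m, t - m) \<in> S'" using need mA nm mt t by auto
        thus ?thesis using Y enat mt False by (auto simp: YP_def trt_def)
      qed
    next
      case False
      thus ?thesis using Y enat nm t by (auto simp: YP_def trt_def)
    qed
  qed
qed

lemma stepok:
  fixes \<theta> :: "enat \<Rightarrow> real^'r" and \<psi> :: "nat \<Rightarrow> real^'r"
  assumes Asub: "A \<subseteq> enat ` {1..T} \<union> {\<infinity>}" and pos: "\<forall>a\<in>A. \<pi> a > 0"
    and aT: "a_star \<le> T"
    and h\<theta>: "affine hull (\<theta> ` {j\<in>A. enat a_star < j}) = UNIV"
    and h\<psi>: "affine hull (\<psi> ` {1..<t_star}) = UNIV"
    and min: "is_ols_minimizer A T \<pi> Y \<theta> \<psi> \<alpha> \<beta> \<phi> \<nu> \<tau>"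
    and nA: "enat n \<in> A" and tn: "t_star \<le> n" and nk: "n + k \<le> a_star"
    and nS: "(n, k) \<notin> S'"
    and need: "\<forall>m k'. enat m \<in> A \<and> n \<le> m \<and> k' < k \<and> m + k' \<le> n + k \<longrightarrow> (m, k') \<in> S'"
  shows "tau_step A \<pi> \<theta> \<psi> (YP Y \<tau> S') n k = \<tau> (enat n) k"
proof -
  have finA: "finite A" using Asub by (rule finite_subset) auto
  have n1: "1 \<le> n" using nA Asub by auto
  define s where "s = n + k"
  define J where "J = {j\<in>A. enat n < j}"
  define L where "L = {1..<s}"
  have finJ: "finite J" using finA by (simp add: J_def)
  have posJ: "\<forall>j\<in>J. \<pi> j > 0" using pos by (simp add: J_def)
  have yJ: "\<theta> (enat n) \<in> affine hull (\<theta> ` J)"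
  proof -
    have "{j\<in>A. enat a_star < j} \<subseteq> J" using nk
      by (auto simp: J_def intro: order_le_less_trans[of "enat n" "enat a_star"])
    hence "affine hull (\<theta> ` {j\<in>A. enat a_star < j}) \<subseteq> affine hull (\<theta> ` J)"
      by (intro hull_mono image_mono)
    thus ?thesis using h\<theta> by auto
  qed
  obtain u0 u where omA: "argmin_on (\<lambda>w. \<Sum>j\<in>J. (w j)\<^sup>2 / \<pi> j)
       {w. (\<forall>j. j \<notin> J \<longrightarrow> w j = 0) \<and> (\<Sum>j\<in>J. w j) = 1 \<and> (\<Sum>j\<in>J. w j *\<^sub>R \<theta> j) = \<theta> (enat n)}
     = (\<lambda>j. if j \<in> J then \<pi> j * (u0 + u \<bullet> \<theta> j) else 0)"
    and om1': "(\<Sum>j\<in>J. \<pi> j * (u0 + u \<bullet> \<theta> j)) = 1"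
    and om2': "(\<Sum>j\<in>J. (\<pi> j * (u0 + u \<bullet> \<theta> j)) *\<^sub>R \<theta> j) = \<theta> (enat n)"
    using minnorm[OF finJ posJ yJ] by blast
  have omeq: "omega_tilde A \<pi> \<theta> n = (\<lambda>j. if j \<in> J then \<pi> j * (u0 + u \<bullet> \<theta> j) else 0)"
    using omA by (simp add: omega_tilde_def J_def Let_def)
  have finL: "finite L" by (simp add: L_def)
  have posL: "\<forall>l\<in>L. (1::real) > 0" by simp
  have yL: "\<psi> s \<in> affine hull (\<psi> ` L)"
  proof -
    have "{1..<t_star} \<subseteq> L" using tn by (auto simp: L_def s_def)
    hence "affine hull (\<psi> ` {1..<t_star}) \<subseteq> affine hull (\<psi> ` L)"
      by (intro hull_mono image_mono)
    thus ?thesis using h\<psi> by auto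
  qed
  obtain v0 v where laA: "argmin_on (\<lambda>w. \<Sum>l\<in>L. (w l)\<^sup>2 / 1)
       {w. (\<forall>l. l \<notin> L \<longrightarrow> w l = 0) \<and> (\<Sum>l\<in>L. w l) = 1 \<and> (\<Sum>l\<in>L. w l *\<^sub>R \<psi> l) = \<psi> s}
     = (\<lambda>l. if l \<in> L then 1 * (v0 + v \<bullet> \<psi> l) else 0)"
    and la1': "(\<Sum>l\<in>L. 1 * (v0 + v \<bullet> \<psi> l)) = 1"
    and la2': "(\<Sum>l\<in>L. (1 * (v0 + v \<bullet> \<psi> l)) *\<^sub>R \<psi> l) = \<psi> s"
    using minnorm[OF finL posL yL] by blast
  have "lambda_tilde \<psi> s = (\<lambda>l. if l \<in> L then 1 * (v0 + v \<bullet> \<psi> l) else 0)"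
    unfolding laA[symmetric] by (simp add: lambda_tilde_def L_def Let_def)
  hence laeq: "lambda_tilde \<psi> s = (\<lambda>l. if l \<in> L then v0 + v \<bullet> \<psi> l else 0)"
    by (simp only: mult_1_left)
  have E0': "\<forall>a\<in>A. \<forall>t\<in>{1..T}. a \<le> enat t \<longrightarrow> res Y \<theta> \<psi> \<alpha> \<beta> \<phi> \<nu> \<tau> a t = 0"
    using E0[OF min finA] pos by blast
  have E1': "\<forall>t\<in>{1..T}. \<forall>c0 c. (\<Sum>a\<in>A. \<pi> a * res Y \<theta> \<psi> \<alpha> \<beta> \<phi> \<nu> \<tau> a t * (c0 + c \<bullet> \<theta> a)) = 0"
    using E1[OF min pos] by blast
  have E2': "\<forall>a\<in>A. \<forall>c0 c. (\<Sum>t=1..T. res Y \<theta> \<psi> \<alpha> \<beta> \<phi> \<nu> \<tau> a t * (c0 + c \<bullet> \<psi> t)) = 0"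
    using E2[OF min pos _ finA] by blast
  have fdef: "\<forall>a t. fv \<theta> \<psi> \<alpha> \<beta> \<phi> \<nu> a t = \<alpha> a + \<beta> t + \<theta> a \<bullet> \<phi> t + \<nu> a \<bullet> \<psi> t"
    by (simp add: fv_def)
  have om: "\<forall>j\<in>{j\<in>A. enat n < j}. omega_tilde A \<pi> \<theta> n j = \<pi> j * (u0 + u \<bullet> \<theta> j)"
    by (simp add: omeq J_def)
  have om1: "(\<Sum>j\<in>{j\<in>A. enat n < j}. omega_tilde A \<pi> \<theta> n j) = 1"
    using om1' om unfolding J_def by (metis (no_types, lifting) sum.cong)
  have om2: "(\<Sum>j\<in>{j\<in>A. enat n < j}. omega_tilde A \<pi> \<theta> n j *\<^sub>R \<theta> j) = \<theta> (enat n)"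
  proof -
    have "(\<Sum>j\<in>J. omega_tilde A \<pi> \<theta> n j *\<^sub>R \<theta> j) = (\<Sum>j\<in>J. (\<pi> j * (u0 + u \<bullet> \<theta> j)) *\<^sub>R \<theta> j)"
      by (intro sum.cong refl) (simp add: omeq)
    thus ?thesis using om2' by (simp add: J_def)
  qed
  have la: "\<forall>l\<in>{1..<s}. lambda_tilde \<psi> s l = v0 + v \<bullet> \<psi> l" by (simp add: laeq L_def)
  have la1: "(\<Sum>l\<in>{1..<s}. lambda_tilde \<psi> s l) = 1"
  proof -
    have "(\<Sum>l\<in>L. lambda_tilde \<psi> s l) = (\<Sum>l\<in>L. 1 * (v0 + v \<bullet> \<psi> l))"
      by (intro sum.cong refl) (simp add: laeq)
    thus ?thesis using la1' by (simp add: L_def)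
  qed
  have la2: "(\<Sum>l\<in>{1..<s}. lambda_tilde \<psi> s l *\<^sub>R \<psi> l) = \<psi> s"
  proof -
    have "(\<Sum>l\<in>L. lambda_tilde \<psi> s l *\<^sub>R \<psi> l) = (\<Sum>l\<in>L. (1 * (v0 + v \<bullet> \<psi> l)) *\<^sub>R \<psi> l)"
      by (intro sum.cong refl) (simp add: laeq)
    thus ?thesis using la2' by (simp add: L_def)
  qed
  have Yc: "\<forall>a'\<in>insert (enat n) {j\<in>A. enat n < j}. \<forall>t\<in>{1..s}.
     YP Y \<tau> S' a' t = fv \<theta> \<psi> \<alpha> \<beta> \<phi> \<nu> a' t + res Y \<theta> \<psi> \<alpha> \<beta> \<phi> \<nu> \<tau> a' t
        + (if a' = enat n \<and> t = s then \<tau> (enat n) k else 0)"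
    unfolding s_def by (rule Yc_ok[OF nA nS need, where Y=Y and \<tau>=\<tau> and \<theta>=\<theta> and \<psi>=\<psi>
        and \<alpha>=\<alpha> and \<beta>=\<beta> and \<phi>=\<phi> and \<nu>=\<nu>])
  have s1: "1 \<le> s" using n1 by (simp add: s_def)
  have sT: "s \<le> T" using nk aT by (simp add: s_def)
  show ?thesis
    by (rule key[OF finA pos nA s_def s1 sT E0' E1' E2' fdef om om1 om2 la la1 la2 Yc])
qed



theorem proposition1:
  fixes A :: "enat set" and T :: nat and \<pi> :: "enat \<Rightarrow> real"
    and Y :: "enat \<Rightarrow> nat \<Rightarrow> real"
    and \<theta> :: "enat \<Rightarrow> real^'r" and \<psi> :: "nat \<Rightarrow> real^'r"
    and t_star a_star :: nat
  assumes "A \<subseteq> enat ` {1..T} \<union> {\<infinity>}"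
    and "\<forall>a\<in>A. \<pi> a > 0"
    and "t_star \<le> a_star" and "a_star \<le> T"
    and "affine hull (\<theta> ` {j\<in>A. enat a_star < j}) = UNIV"
    and "affine hull (\<psi> ` {1..<t_star}) = UNIV"
  shows "\<forall>\<alpha> \<beta> \<phi> \<nu> \<tau>. is_ols_minimizer A T \<pi> Y \<theta> \<psi> \<alpha> \<beta> \<phi> \<nu> \<tau> \<longrightarrow>
           (\<forall>a k. enat a \<in> A \<and> t_star \<le> a \<and> a + k \<le> a_star \<longrightarrow>
              \<tau> (enat a) k = seq_ols A \<pi> Y \<theta> \<psi> t_star a_star (enat a) k)"
proof (intro allI impI)
  fix \<alpha> \<beta> \<phi> \<nu> \<tau> a k
  assume min: "is_ols_minimizer A T \<pi> Y \<theta> \<psi> \<alpha> \<beta> \<phi> \<nu> \<tau>"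
    and cond: "enat a \<in> A \<and> t_star \<le> a \<and> a + k \<le> a_star"
  note Asub = assms(1) and pos = assms(2) and aT = assms(4) and h\<theta> = assms(5) and h\<psi> = assms(6)
  define row where "row K = map (\<lambda>a. (a, K)) (filter (\<lambda>a. enat a \<in> A) [t_star..<a_star - K + 1])" for K
  define Sk where "Sk K = {(m, k'). k' < K \<and> enat m \<in> A \<and> t_star \<le> m \<and> m \<le> a_star - k'}" for K
  have steps: "seq_steps A t_star a_star = concat (map row [0..<a_star - t_star + 1])"
    unfolding seq_steps_def row_def by (rule refl)
  have A1: "\<And>m. enat m \<in> A \<Longrightarrow> 1 \<le> m" using Asub by auto
  have fold: "foldl (stepF A \<pi> \<theta> \<psi>) (Y, \<lambda>_ _. 0) (concat (map row [0..<K])) = (YP Y \<tau> (Sk K), TP \<tau> (Sk K))" for K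
  proof (induction K)
    case 0
    have "YP Y \<tau> (Sk 0) = Y" by (intro ext) (simp add: YP_def Sk_def)
    moreover have "TP \<tau> (Sk 0) = (\<lambda>_ _. 0)" by (intro ext) (simp add: TP_def Sk_def)
    ultimately show ?case by simp
  next
    case (Suc K)
    have "foldl (stepF A \<pi> \<theta> \<psi>) (Y, \<lambda>_ _. 0) (concat (map row [0..<Suc K]))
        = foldl (stepF A \<pi> \<theta> \<psi>) (YP Y \<tau> (Sk K), TP \<tau> (Sk K)) (row K)"
      using Suc.IH by simp
    also have "\<dots> = (YP Y \<tau> (Sk K \<union> set (row K)), TP \<tau> (Sk K \<union> set (row K)))"
    proof (rule fold_inv)
      show "distinct (row K)" by (simp add: row_def distinct_map inj_on_def)
      show "set (row K) \<inter> Sk K = {}" by (auto simp: row_def Sk_def)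
      show "\<forall>x\<in>set (row K). \<forall>S'. Sk K \<subseteq> S' \<and> x \<notin> S' \<longrightarrow>
            tau_step A \<pi> \<theta> \<psi> (YP Y \<tau> S') (fst x) (snd x) = \<tau> (enat (fst x)) (snd x)"
      proof (intro ballI allI impI)
        fix x S' assume x: "x \<in> set (row K)" and S': "Sk K \<subseteq> S' \<and> x \<notin> S'"
        obtain n where xn: "x = (n, K)" and nA: "enat n \<in> A" and tn: "t_star \<le> n"
          and na: "n < a_star - K + 1"
          using x by (auto simp: row_def)
        have "1 \<le> n" using A1 nA .
        hence nk: "n + K \<le> a_star" using na by linarith
        have need: "\<forall>m k'. enat m \<in> A \<and> n \<le> m \<and> k' < K \<and> m + k' \<le> n + K \<longrightarrow> (m, k') \<in> S'"
        proof (intro allI impI)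
          fix m k' assume "enat m \<in> A \<and> n \<le> m \<and> k' < K \<and> m + k' \<le> n + K"
          hence "(m, k') \<in> Sk K" using tn nk by (auto simp: Sk_def)
          thus "(m, k') \<in> S'" using S' by blast
        qed
        show "tau_step A \<pi> \<theta> \<psi> (YP Y \<tau> S') (fst x) (snd x) = \<tau> (enat (fst x)) (snd x)"
          using stepok[OF Asub pos aT h\<theta> h\<psi> min nA tn nk _ need] S' xn by simp
      qed
    qed
    also have "Sk K \<union> set (row K) = Sk (Suc K)"
      by (auto simp: Sk_def row_def)
    finally show ?case .
  qed
  have "seq_ols A \<pi> Y \<theta> \<psi> t_star a_star = TP \<tau> (Sk (a_star - t_star + 1))"
    unfolding seq_ols_alt steps fold by simp
  moreover have "(a, k) \<in> Sk (a_star - t_star + 1)" using cond by (auto simp: Sk_def)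
  ultimately show "\<tau> (enat a) k = seq_ols A \<pi> Y \<theta> \<psi> t_star a_star (enat a) k"
    by (auto simp: TP_def)
qed

end
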